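(* Let $n \ge 1$, $1 \le k \le 2^n$ and $0 \le q \le n$. Let $S^*_{k,n} = \{\mathrm{bin}(0),\mathrm{bin}(1),\ldots,\mathrm{bin}(k-1)\} \subseteq B_n$. Then $m_q(S^*_{k,n}) = \sum_{j=0}^{k-1} h_q(j)$, and for every set $S \subseteq B_n$ with $|S| = k$ we have $m_q(S) \le m_q(S^*_{k,n})$. That is, $S^*_{k,n}$ contains the maximum possible number of $q$-dimensional subcubes among all $k$-element subsets of $B_n$.
   Context: The $n$-cube is $B_n = \{0,1\}^n$; the coordinates of $x \in B_n$ are indexed $x = (x_{n-1},\ldots,x_1,x_0)$, and $x$ represents the integer $\sum_{i=0}^{n-1} x_i 2^i$. For $i \in [0:2^n-1]$, $\mathrm{bin}(i) \in B_n$ is the $n$-bit binary representation of $i$ (with leading zeros). $h(i)$ denotes the number of ones in $\mathrm{bin}(i)$, and $h_q(i) = \binom{h(i)}{q}$. A $q$-dimensional subcube of $B_n$ is a set of the form $\{x \in B_n : x_i = b(i) \text{ for all } i \in Q\}$, where $Q \subseteq [0:n-1]$ has size $n-q$ and $b : Q \to \{0,1\}$ is arbitrary. For $S \subseteq B_n$, $m_q(S)$ denotes the number of $q$-dimensional subcubes of $B_n$ contained in $S$. *)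

theory Defs
  imports Main
begin

text \<open>The n-cube B_n: points are bit vectors x :: nat => bool with x i = False for i >= n;
  x i is the coordinate x_i.\<close>
definition cube :: "nat \<Rightarrow> (nat \<Rightarrow> bool) set" where
  "cube n = {x. \<forall>i. n \<le> i \<longrightarrow> \<not> x i}"

definition bin :: "nat \<Rightarrow> nat \<Rightarrow> (nat \<Rightarrow> bool)" where
  "bin n i = (\<lambda>j. j < n \<and> odd (i div 2 ^ j))"

definition h :: "nat \<Rightarrow> nat" where
  "h i = card {j. odd (i div 2 ^ j)}"

definition hq :: "nat \<Rightarrow> nat \<Rightarrow> nat" where
  "hq q i = h i choose q"

definition subcubes :: "nat \<Rightarrow> nat \<Rightarrow> (nat \<Rightarrow> bool) set set" where
  "subcubes n q = {C. \<exists>Q b. Q \<subseteq> {..<n} \<and> card Q = n - q \<and>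
                        C = {x \<in> cube n. \<forall>i\<in>Q. x i = b i}}"

definition m :: "nat \<Rightarrow> nat \<Rightarrow> (nat \<Rightarrow> bool) set \<Rightarrow> nat" where
  "m n q S = card {C \<in> subcubes n q. C \<subseteq> S}"

definition Sstar :: "nat \<Rightarrow> nat \<Rightarrow> (nat \<Rightarrow> bool) set" where
  "Sstar k n = bin n ` {..<k}"

end

theory Submission
  imports Defs
begin


definition F :: "nat \<Rightarrow> nat \<Rightarrow> nat" where "F k q = (\<Sum>j<k. hq q j)"
definition X :: "(nat \<Rightarrow> nat) \<Rightarrow> nat \<Rightarrow> nat" where
  "X G q = G q + (case q of 0 \<Rightarrow> 0 | Suc p \<Rightarrow> G p)"

lemma X_mono: "(\<And>q. G q \<le> H q) \<Longrightarrow> X G q \<le> X H q"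
  by (auto simp: X_def split: nat.split intro: add_mono)
lemma X_add: "X (\<lambda>q. G q + H q) q = X G q + X H q"
  by (simp add: X_def split: nat.split)
lemma X_ge: "G q \<le> X G q" by (simp add: X_def)

lemma hset_fin: "finite {j. odd ((i::nat) div 2 ^ j)}"
proof -
  have "{j. odd (i div 2 ^ j)} \<subseteq> {..i}"
  proof
    fix j assume "j \<in> {j. odd (i div 2 ^ j)}"
    hence o: "odd (i div 2 ^ j)" by simp
    show "j \<in> {..i}"
    proof (rule ccontr)
      assume "j \<notin> {..i}"
      hence "i < j" by simp
      hence "i < 2 ^ j" using less_exp[of j] by linarith
      hence "i div 2 ^ j = 0" by simp
      thus False using o by simp
    qed
  qed
  thus ?thesis using finite_subset by blast
qed

lemma h_even: "h (2 * i) = h i"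
proof -
  have "{j. odd ((2*i) div 2 ^ j)} = Suc ` {j. odd (i div 2 ^ j)}"
  proof (rule set_eqI)
    fix j show "j \<in> {j. odd ((2*i) div 2 ^ j)} \<longleftrightarrow> j \<in> Suc ` {j. odd (i div 2 ^ j)}"
    proof (cases j)
      case 0 thus ?thesis by auto
    next
      case (Suc j')
      have "(2*i) div 2 ^ j = i div 2 ^ j'" using Suc by (simp add: div_mult2_eq)
      thus ?thesis using Suc by auto
    qed
  qed
  thus ?thesis unfolding h_def by (simp add: card_image)
qed

lemma h_odd: "h (Suc (2 * i)) = Suc (h i)"
proof -
  have "{j. odd (Suc (2*i) div 2 ^ j)} = insert 0 (Suc ` {j. odd (i div 2 ^ j)})"
  proof (rule set_eqI)
    fix j show "j \<in> {j. odd (Suc (2*i) div 2 ^ j)} \<longleftrightarrow> j \<in> insert 0 (Suc ` {j. odd (i div 2 ^ j)})"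
    proof (cases j)
      case 0 thus ?thesis by auto
    next
      case (Suc j')
      have "Suc (2*i) div 2 ^ j = i div 2 ^ j'" using Suc by (simp add: div_mult2_eq)
      thus ?thesis using Suc by auto
    qed
  qed
  thus ?thesis unfolding h_def using hset_fin[of i] by (simp add: card_image)
qed

lemma hq_Suc: "h a = Suc (h b) \<Longrightarrow> hq q a = X (\<lambda>q. hq q b) q"
  by (cases q) (simp_all add: hq_def X_def)

lemma F_Suc: "F (Suc k) = (\<lambda>q. F k q + hq q k)"
  by (simp add: F_def fun_eq_iff)

lemma F_even: "F (2*c) q = F c q + X (F c) q"
proof (induction c arbitrary: q)
  case 0 thus ?case by (simp add: F_def X_def split: nat.split)
next
  case (Suc c)
  have "F (2 * Suc c) q = F (2*c) q + hq q (2*c) + hq q (Suc (2*c))"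
    by (simp add: F_def)
  also have "\<dots> = F c q + X (F c) q + hq q c + X (\<lambda>q. hq q c) q"
    using Suc hq_Suc[OF h_odd[of c], of q] by (simp add: hq_def h_even)
  also have "\<dots> = F (Suc c) q + X (F (Suc c)) q"
    by (simp add: F_Suc X_add)
  finally show ?case .
qed

lemma F_odd: "F (Suc (2*c)) q = F (Suc c) q + X (F c) q"
  using F_even[of c q] by (simp add: F_def hq_def h_even)

lemma F_even_fun: "F (2*c) = (\<lambda>q. F c q + X (F c) q)"
  using F_even by auto
lemma F_odd_fun: "F (Suc (2*c)) = (\<lambda>q. F (Suc c) q + X (F c) q)"
  using F_odd by auto

lemma F_0: "F 0 q = 0" by (simp add: F_def)

lemma ineq: "b \<le> a \<Longrightarrow> F a q + X (F b) q \<le> F (a+b) q"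
proof (induction "a+b" arbitrary: a b q rule: less_induct)
  case less
  show ?case
  proof (cases "b = 0")
    case True thus ?thesis by (simp add: X_def F_0 split: nat.split)
  next
    case b0: False
    show ?thesis
    proof (cases "even a")
      case ea: True
      then obtain c where a: "a = 2*c" by (rule evenE)
      show ?thesis
      proof (cases "even b")
        case True
        then obtain d where b: "b = 2*d" by (rule evenE)
        have IH: "\<And>q. F c q + X (F d) q \<le> F (c + d) q"
          by (rule less(1); insert less(2) a b b0; linarith)
        have m: "X (\<lambda>q. F c q + X (F d) q) q \<le> X (F (c+d)) q" by (rule X_mono) (rule IH)

        have m': "X (F c) q + X (X (F d)) q \<le> X (F (c+d)) q" using m unfolding X_add .
        have ab: "a + b = 2*(c+d)" using a b by simp
        have e3: "F (a+b) q = F (c+d) q + X (F (c+d)) q" unfolding ab by (rule F_even)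
        have e1: "F a q = F c q + X (F c) q" using a F_even by simp
        have e2: "X (F b) q = X (F d) q + X (X (F d)) q" unfolding b F_even_fun X_add ..
        show ?thesis unfolding e1 e2 e3 using m' IH[of q]  by linarith
      next
        case False
        then obtain d where "b = 2*d + 1" by (rule oddE)
      hence b: "b = Suc (2*d)" by simp
        have IH1: "F c q + X (F (Suc d)) q \<le> F (c + (Suc d)) q"
          by (rule less(1); insert less(2) a b; linarith)
        have IH2: "\<And>q. F c q + X (F d) q \<le> F (c + d) q"
          by (rule less(1); insert less(2) a b; linarith)
        have m: "X (\<lambda>q. F c q + X (F d) q) q \<le> X (F (c+d)) q" by (rule X_mono) (rule IH2)

        have m': "X (F c) q + X (X (F d)) q \<le> X (F (c+d)) q" using m unfolding X_add .
        have ab: "a + b = Suc (2*(c+d))" using a b by simp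
        have e3: "F (a+b) q = F (Suc (c+d)) q + X (F (c+d)) q" unfolding ab by (rule F_odd)
        have e1: "F a q = F c q + X (F c) q" using a F_even by simp
        have e2: "X (F b) q = X (F (Suc d)) q + X (X (F d)) q" unfolding b F_odd_fun X_add ..
        have IH1': "F c q + X (F (Suc d)) q \<le> F (Suc (c + d)) q" using IH1 by simp
        show ?thesis unfolding e1 e2 e3 using m' IH1'  by linarith
      qed
    next
      case oa: False
      then obtain c where "a = 2*c + 1" by (rule oddE)
      hence a: "a = Suc (2*c)" by simp
      show ?thesis
      proof (cases "even b")
        case True
        then obtain d where b: "b = 2*d" by (rule evenE)
        have IH1: "F (Suc c) q + X (F d) q \<le> F ((Suc c) + d) q"
          by (rule less(1); insert less(2) a b b0; linarith)
        have IH2: "\<And>q. F c q + X (F d) q \<le> F (c + d) q"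
          by (rule less(1); insert less(2) a b b0; linarith)
        have m: "X (\<lambda>q. F c q + X (F d) q) q \<le> X (F (c+d)) q" by (rule X_mono) (rule IH2)

        have m': "X (F c) q + X (X (F d)) q \<le> X (F (c+d)) q" using m unfolding X_add .
        have ab: "a + b = Suc (2*(c+d))" using a b by simp
        have e3: "F (a+b) q = F (Suc (c+d)) q + X (F (c+d)) q" unfolding ab by (rule F_odd)
        have e1: "F a q = F (Suc c) q + X (F c) q" using a F_odd by simp
        have e2: "X (F b) q = X (F d) q + X (X (F d)) q" unfolding b F_even_fun X_add ..
        have IH1': "F (Suc c) q + X (F d) q \<le> F (Suc (c + d)) q" using IH1 by simp
        show ?thesis unfolding e1 e2 e3 using m' IH1'  by linarith
      next
        case bo: False
        then obtain d where "b = 2*d + 1" by (rule oddE)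
      hence b: "b = Suc (2*d)" by simp
        show ?thesis
        proof (cases "d = c")
          case True
          have ab: "a + b = 2 * a" using a b True by simp
          have "F (2*a) q = F a q + X (F a) q" by (rule F_even)
          thus ?thesis unfolding ab using a b True by simp
        next
          case dc: False
          have "d \<le> c" using less(2) a b by simp
          hence dlt: "d < c" using dc by simp
          have IH1: "F (Suc c) q + X (F d) q \<le> F ((Suc c) + d) q"
            by (rule less(1); insert less(2) a b; linarith)
          have IH2: "\<And>q. F c q + X (F (Suc d)) q \<le> F (c + (Suc d)) q"
            by (rule less(1); insert dlt less(2) a b b0; linarith)
          have IH2': "\<And>q. F c q + X (F (Suc d)) q \<le> F (Suc (c + d)) q" using IH2 by simp
          have IH1': "F (Suc c) q + X (F d) q \<le> F (Suc (c + d)) q" using IH1 by simp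
          have m: "X (\<lambda>q. F c q + X (F (Suc d)) q) q \<le> X (F (Suc (c+d))) q"
            by (rule X_mono) (rule IH2')

          have m': "X (F c) q + X (X (F (Suc d))) q \<le> X (F (Suc (c+d))) q" using m unfolding X_add .
          have g: "X (\<lambda>q. hq q d) q \<le> X (\<lambda>q. X (\<lambda>q. hq q d) q) q" by (rule X_ge)
          have ab: "a + b = 2*(Suc (c + d))" using a b by simp
          have e3: "F (a+b) q = F (Suc (c+d)) q + X (F (Suc (c+d))) q" unfolding ab by (rule F_even)
          have e1: "F a q = F (Suc c) q + X (F c) q" using a F_odd by simp
          have e2: "X (F b) q = X (F (Suc d)) q + X (X (F d)) q" unfolding b F_odd_fun X_add ..
          have e4: "X (F (Suc d)) q = X (F d) q + X (\<lambda>q. hq q d) q" unfolding F_Suc X_add ..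
          have e5: "X (X (F (Suc d))) q = X (X (F d)) q + X (\<lambda>q. X (\<lambda>q. hq q d) q) q"
            unfolding F_Suc X_add ..
          show ?thesis unfolding e1 e2 e3 using m' IH1' g e4 e5 by linarith
        qed
      qed
    qed
  qed
qed



definition Cb :: "nat \<Rightarrow> nat set \<Rightarrow> (nat \<Rightarrow> bool) \<Rightarrow> (nat \<Rightarrow> bool) set" where
  "Cb n A c = {x \<in> cube n. \<forall>i<n. i \<notin> A \<longrightarrow> x i = c i}"
definition pairs :: "nat \<Rightarrow> nat \<Rightarrow> (nat set \<times> (nat \<Rightarrow> bool)) set" where
  "pairs n q = {(A,c). A \<subseteq> {..<n} \<and> card A = q \<and> c \<in> cube n \<and> (\<forall>i\<in>A. \<not> c i)}"
definition P :: "nat \<Rightarrow> nat \<Rightarrow> (nat \<Rightarrow> bool) set \<Rightarrow> nat" where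
  "P n q S = card {p \<in> pairs n q. Cb n (fst p) (snd p) \<subseteq> S}"

lemma finite_cube: "finite (cube n)"
proof -
  have "cube n \<subseteq> (\<lambda>A i. i \<in> A) ` Pow {..<n}"
  proof
    fix x assume x: "x \<in> cube n"
    have m: "{i. x i} \<in> Pow {..<n}" using x by (auto simp: cube_def not_less[symmetric])
    have e: "x = (\<lambda>i. i \<in> {i. x i})" by simp
    show "x \<in> (\<lambda>A i. i \<in> A) ` Pow {..<n}" by (rule image_eqI[where f="\<lambda>A i. i \<in> A", OF e m])
  qed
  thus ?thesis by (rule finite_subset) simp
qed

lemma finite_pairs: "finite (pairs n q)"
proof -
  have s: "pairs n q \<subseteq> Pow {..<n} \<times> cube n" by (auto simp: pairs_def)
  have "finite (Pow {..<n} \<times> cube n)" using finite_cube by simp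
  thus ?thesis using s finite_subset by blast
qed

lemma cube_Suc_False: "x \<in> cube (Suc n) \<Longrightarrow> \<not> x n \<Longrightarrow> x \<in> cube n"
proof -
  assume x: "x \<in> cube (Suc n)" and xn: "\<not> x n"
  have "\<And>i. n \<le> i \<Longrightarrow> \<not> x i"
  proof -
    fix i assume "n \<le> i"
    show "\<not> x i"
    proof (cases "i = n")
      case True thus ?thesis using xn by simp
    next
      case False hence "Suc n \<le> i" using \<open>n \<le> i\<close> by simp
      thus ?thesis using x by (simp add: cube_def)
    qed
  qed
  thus "x \<in> cube n" by (simp add: cube_def)
qed
lemma cube_le: "x \<in> cube n \<Longrightarrow> x \<in> cube (Suc n)"
  unfolding cube_def by simp
lemma cube_upd_False: "x \<in> cube (Suc n) \<Longrightarrow> x(n:=False) \<in> cube n"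
  using cube_Suc_False[of "x(n:=False)" n] unfolding cube_def by simp
lemma cube_upd_True: "y \<in> cube n \<Longrightarrow> y(n:=True) \<in> cube (Suc n)"
  unfolding cube_def by simp
lemma cube_n: "y \<in> cube n \<Longrightarrow> \<not> y n"
  unfolding cube_def by simp
lemma upd_cancel: "y \<in> cube n \<Longrightarrow> z \<in> cube n \<Longrightarrow> y(n:=True) = z(n:=True) \<Longrightarrow> y = z"
proof (rule ext)
  fix i assume y: "y \<in> cube n" and z: "z \<in> cube n" and e: "y(n:=True) = z(n:=True)"
  show "y i = z i"
  proof (cases "i = n")
    case True thus ?thesis using y z cube_n by auto
  next
    case False thus ?thesis using fun_cong[OF e, of i] by simp
  qed
qed

lemma Cb_sub: "Cb n A c \<subseteq> cube n" by (auto simp: Cb_def)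
lemma Cb_mem: "c \<in> cube n \<Longrightarrow> c \<in> Cb n A c" by (auto simp: Cb_def)

lemma Cb1: "A \<subseteq> {..<n} \<Longrightarrow> \<not> c n \<Longrightarrow> Cb (Suc n) A c = Cb n A c"
proof (rule set_eqI)
  fix x assume A: "A \<subseteq> {..<n}" and c: "\<not> c n"
  show "x \<in> Cb (Suc n) A c \<longleftrightarrow> x \<in> Cb n A c"
  proof
    assume x: "x \<in> Cb (Suc n) A c"
    have "n \<notin> A" using A by auto
    hence "\<not> x n" using x c by (auto simp: Cb_def)
    thus "x \<in> Cb n A c" using x cube_Suc_False by (auto simp: Cb_def)
  next
    assume x: "x \<in> Cb n A c"
    hence "\<not> x n" by (auto simp: Cb_def cube_def)
    thus "x \<in> Cb (Suc n) A c" using x c cube_le by (auto simp: Cb_def less_Suc_eq)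
  qed
qed

lemma Cb2: "A \<subseteq> {..<n} \<Longrightarrow> Cb (Suc n) A (c(n:=True)) = (\<lambda>y. y(n:=True)) ` Cb n A c"
proof (rule set_eqI)
  fix x assume A: "A \<subseteq> {..<n}"
  have nA: "n \<notin> A" using A by auto
  show "x \<in> Cb (Suc n) A (c(n:=True)) \<longleftrightarrow> x \<in> (\<lambda>y. y(n:=True)) ` Cb n A c"
  proof
    assume x: "x \<in> Cb (Suc n) A (c(n:=True))"
    hence xn: "x n" using nA by (auto simp: Cb_def)
    have m: "x(n:=False) \<in> Cb n A c" using x cube_upd_False by (auto simp: Cb_def)
    have e: "x = (x(n:=False))(n:=True)" using xn by (simp add: fun_eq_iff)
    show "x \<in> (\<lambda>y. y(n:=True)) ` Cb n A c" by (rule image_eqI[where f="\<lambda>y. y(n:=True)", OF e m])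
  next
    assume "x \<in> (\<lambda>y. y(n:=True)) ` Cb n A c"
    then obtain y where y: "y \<in> Cb n A c" and x: "x = y(n:=True)" by blast
    show "x \<in> Cb (Suc n) A (c(n:=True))" using y cube_upd_True unfolding x
      by (auto simp: Cb_def less_Suc_eq)
  qed
qed

lemma Cb3: "A \<subseteq> {..<n} \<Longrightarrow> Cb (Suc n) (insert n A) c = Cb n A c \<union> (\<lambda>y. y(n:=True)) ` Cb n A c"
proof (rule set_eqI)
  fix x assume A: "A \<subseteq> {..<n}"
  show "x \<in> Cb (Suc n) (insert n A) c \<longleftrightarrow> x \<in> Cb n A c \<union> (\<lambda>y. y(n:=True)) ` Cb n A c"
  proof
    assume x: "x \<in> Cb (Suc n) (insert n A) c"
    show "x \<in> Cb n A c \<union> (\<lambda>y. y(n:=True)) ` Cb n A c"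
    proof (cases "x n")
      case False thus ?thesis using x cube_Suc_False by (auto simp: Cb_def)
    next
      case True
      have m: "x(n:=False) \<in> Cb n A c" using x cube_upd_False by (auto simp: Cb_def)
      have e: "x = (x(n:=False))(n:=True)" using True by (simp add: fun_eq_iff)
      show ?thesis using image_eqI[where f="\<lambda>y. y(n:=True)", OF e m] by (rule UnI2)
    qed
  next
    assume "x \<in> Cb n A c \<union> (\<lambda>y. y(n:=True)) ` Cb n A c"
    thus "x \<in> Cb (Suc n) (insert n A) c"
    proof
      assume "x \<in> Cb n A c" thus ?thesis using cube_le by (auto simp: Cb_def less_Suc_eq)
    next
      assume "x \<in> (\<lambda>y. y(n:=True)) ` Cb n A c"
      then obtain y where y: "y \<in> Cb n A c" and x: "x = y(n:=True)" by blast
      show ?thesis using y cube_upd_True unfolding x by (auto simp: Cb_def less_Suc_eq)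
    qed
  qed
qed



lemma sub_n: "Q \<subseteq> {..<Suc n} \<Longrightarrow> n \<notin> Q \<Longrightarrow> Q \<subseteq> {..<n}"
  by (auto simp: less_Suc_eq)

lemma P_Suc: "P (Suc n) q S = P n q (S \<inter> cube n) + P n q {y \<in> cube n. y(n:=True) \<in> S}
   + (case q of 0 \<Rightarrow> 0 | Suc p \<Rightarrow> P n p (S \<inter> cube n \<inter> {y \<in> cube n. y(n:=True) \<in> S}))"
proof -
  define S0 where "S0 = S \<inter> cube n"
  define S1 where "S1 = {y \<in> cube n. y(n:=True) \<in> S}"
  define A where "A = {p \<in> pairs (Suc n) q. Cb (Suc n) (fst p) (snd p) \<subseteq> S}"
  define B where "B r T = {p \<in> pairs n r. Cb n (fst p) (snd p) \<subseteq> T}" for r T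
  define A1 where "A1 = {p \<in> A. n \<notin> fst p \<and> \<not> snd p n}"
  define A2 where "A2 = {p \<in> A. n \<notin> fst p \<and> snd p n}"
  define A3 where "A3 = {p \<in> A. n \<in> fst p}"
  have finA: "finite A" unfolding A_def using finite_pairs by simp
  have AU: "A = A1 \<union> A2 \<union> A3" unfolding A1_def A2_def A3_def by blast
  have cA: "card A = card A1 + card A2 + card A3"
  proof -
    have f1: "finite A1" "finite A2" "finite A3" using finA unfolding A1_def A2_def A3_def by auto
    have "card (A1 \<union> A2 \<union> A3) = card (A1 \<union> A2) + card A3"
      by (rule card_Un_disjoint) (use f1 in \<open>auto simp: A1_def A2_def A3_def\<close>)
    also have "card (A1 \<union> A2) = card A1 + card A2"
      by (rule card_Un_disjoint) (use f1 in \<open>auto simp: A1_def A2_def\<close>)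
    finally show ?thesis using AU by simp
  qed
  have e1: "A1 = B q S0"
  proof (rule set_eqI)
    fix p :: "nat set \<times> (nat \<Rightarrow> bool)"
    obtain Q c where p: "p = (Q, c)" by (cases p)
    show "p \<in> A1 \<longleftrightarrow> p \<in> B q S0"
    proof
      assume "p \<in> A1"
      hence h: "Q \<subseteq> {..<Suc n}" "card Q = q" "c \<in> cube (Suc n)" "\<forall>i\<in>Q. \<not> c i"
        "Cb (Suc n) Q c \<subseteq> S" "n \<notin> Q" "\<not> c n"
        unfolding A1_def A_def pairs_def p by auto
      have Q: "Q \<subseteq> {..<n}" using sub_n h by blast
      have c: "c \<in> cube n" using cube_Suc_False h by blast
      have "Cb n Q c \<subseteq> S0" using Cb1[of Q n c, OF Q h(7)] h(5) Cb_sub unfolding S0_def by blast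
      thus "p \<in> B q S0" using Q c h unfolding B_def pairs_def p by auto
    next
      assume "p \<in> B q S0"
      hence h: "Q \<subseteq> {..<n}" "card Q = q" "c \<in> cube n" "\<forall>i\<in>Q. \<not> c i" "Cb n Q c \<subseteq> S0"
        unfolding B_def pairs_def p by auto
      have cn: "\<not> c n" using cube_n h by blast
      have "Cb (Suc n) Q c \<subseteq> S" using Cb1[of Q n c, OF h(1) cn] h(5) unfolding S0_def by blast
      thus "p \<in> A1" using h cn cube_le unfolding A1_def A_def pairs_def p by auto
    qed
  qed
  have e2: "A2 = (\<lambda>p. (fst p, (snd p)(n:=True))) ` B q S1"
  proof (rule set_eqI)
    fix p :: "nat set \<times> (nat \<Rightarrow> bool)"
    obtain Q c where p: "p = (Q, c)" by (cases p)
    show "p \<in> A2 \<longleftrightarrow> p \<in> (\<lambda>p. (fst p, (snd p)(n:=True))) ` B q S1"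
    proof
      assume "p \<in> A2"
      hence h: "Q \<subseteq> {..<Suc n}" "card Q = q" "c \<in> cube (Suc n)" "\<forall>i\<in>Q. \<not> c i"
        "Cb (Suc n) Q c \<subseteq> S" "n \<notin> Q" "c n"
        unfolding A2_def A_def pairs_def p by auto
      have Q: "Q \<subseteq> {..<n}" using sub_n h by blast
      define c' where "c' = c(n:=False)"
      have c': "c' \<in> cube n" unfolding c'_def using cube_upd_False h by blast
      have cc: "c = c'(n:=True)" unfolding c'_def using h(7) by (simp add: fun_eq_iff)
      have "Cb n Q c' \<subseteq> S1"
      proof
        fix y assume y: "y \<in> Cb n Q c'"
        have "y(n:=True) \<in> Cb (Suc n) Q c" unfolding cc Cb2[OF Q] using y by blast
        thus "y \<in> S1" using y h(5) Cb_sub unfolding S1_def by blast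
      qed
      hence m: "(Q, c') \<in> B q S1" using Q c' h unfolding B_def pairs_def c'_def by auto
      have e: "p = (\<lambda>p. (fst p, (snd p)(n:=True))) (Q, c')" using cc p by simp
      show "p \<in> (\<lambda>p. (fst p, (snd p)(n:=True))) ` B q S1"
        by (rule image_eqI[where f="\<lambda>p. (fst p, (snd p)(n:=True))", OF e m])
    next
      assume "p \<in> (\<lambda>p. (fst p, (snd p)(n:=True))) ` B q S1"
      then obtain Q' c' where m: "(Q', c') \<in> B q S1" and pe: "p = (Q', c'(n:=True))" by auto
      have h: "Q' \<subseteq> {..<n}" "card Q' = q" "c' \<in> cube n" "\<forall>i\<in>Q'. \<not> c' i" "Cb n Q' c' \<subseteq> S1"
        using m unfolding B_def pairs_def by auto
      have "Cb (Suc n) Q' (c'(n:=True)) \<subseteq> S"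
        unfolding Cb2[OF h(1)] using h(5) unfolding S1_def by blast
      moreover have "c'(n:=True) \<in> cube (Suc n)" using cube_upd_True h by blast
      moreover have "Q' \<subseteq> {..<Suc n}" "n \<notin> Q'" using h(1) by auto
      moreover have "\<forall>i\<in>Q'. \<not> (c'(n:=True)) i"
      proof (intro ballI)
        fix i assume i: "i \<in> Q'"
        hence "i \<noteq> n" using \<open>n \<notin> Q'\<close> by blast
        thus "\<not> (c'(n:=True)) i" using h(4) i by simp
      qed
      ultimately show "p \<in> A2" using h(2) unfolding pe A2_def A_def pairs_def by simp
    qed
  qed
  have inj2: "inj_on (\<lambda>p. (fst p, (snd p)(n:=True))) (B q S1)"
  proof (rule inj_onI)
    fix p p' assume a: "p \<in> B q S1" "p' \<in> B q S1"
      "(fst p, (snd p)(n:=True)) = (fst p', (snd p')(n:=True))"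
    have h12: "snd p \<in> cube n" "snd p' \<in> cube n"
      using a(1,2) unfolding B_def pairs_def by (cases p, simp, cases p', simp)
    have h34: "fst p = fst p'" "(snd p)(n:=True) = (snd p')(n:=True)" using a(3) by simp_all
    note h = h12 h34
    have "snd p = snd p'" by (rule upd_cancel[OF h(1) h(2) h(4)])
    thus "p = p'" using h(3) by (simp add: prod_eq_iff)
  qed
  have c3: "card A3 = (case q of 0 \<Rightarrow> 0 | Suc p \<Rightarrow> P n p (S0 \<inter> S1))"
  proof (cases q)
    case 0
    have "A3 = {}"
    proof (rule equals0I)
      fix p assume "p \<in> A3"
      hence h: "n \<in> fst p" "card (fst p) = 0" "fst p \<subseteq> {..<Suc n}"
        unfolding A3_def A_def pairs_def 0 by auto
      have "finite (fst p)" using h(3) finite_subset by blast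
      thus False using h by simp
    qed
    thus ?thesis using 0 by simp
  next
    case (Suc r)
    have e3: "A3 = (\<lambda>p. (insert n (fst p), snd p)) ` B r (S0 \<inter> S1)"
    proof (rule set_eqI)
      fix p :: "nat set \<times> (nat \<Rightarrow> bool)"
      obtain Q c where p: "p = (Q, c)" by (cases p)
      show "p \<in> A3 \<longleftrightarrow> p \<in> (\<lambda>p. (insert n (fst p), snd p)) ` B r (S0 \<inter> S1)"
      proof
        assume "p \<in> A3"
        hence h: "Q \<subseteq> {..<Suc n}" "card Q = Suc r" "c \<in> cube (Suc n)" "\<forall>i\<in>Q. \<not> c i"
          "Cb (Suc n) Q c \<subseteq> S" "n \<in> Q"
          unfolding A3_def A_def pairs_def p Suc by auto
        define Q' where "Q' = Q - {n}"
        have FF: "Q = insert n Q'" unfolding Q'_def using h(6) by auto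
        have Q': "Q' \<subseteq> {..<n}" unfolding Q'_def using h(1) by (auto simp: less_Suc_eq)
        have finF: "finite Q" using h(1) finite_subset by blast
        have cF': "card Q' = r" unfolding Q'_def using h(2) h(6) finF by (simp add: card_Diff_singleton)
        have c: "c \<in> cube n" using cube_Suc_False h by blast
        have "Cb n Q' c \<subseteq> S0 \<inter> S1"
        proof
          fix y assume y: "y \<in> Cb n Q' c"
          have "Cb (Suc n) Q c = Cb n Q' c \<union> (\<lambda>y. y(n:=True)) ` Cb n Q' c"
            unfolding FF by (rule Cb3[OF Q'])
          hence "y \<in> S" "y(n:=True) \<in> S" using y h(5) by blast+
          thus "y \<in> S0 \<inter> S1" using y Cb_sub unfolding S0_def S1_def by blast
        qed
        hence m: "(Q', c) \<in> B r (S0 \<inter> S1)" using Q' cF' c h(4) unfolding B_def pairs_def Q'_def by auto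
        have e: "p = (\<lambda>p. (insert n (fst p), snd p)) (Q', c)" using FF p by simp
        show "p \<in> (\<lambda>p. (insert n (fst p), snd p)) ` B r (S0 \<inter> S1)"
          by (rule image_eqI[where f="\<lambda>p. (insert n (fst p), snd p)", OF e m])
      next
        assume "p \<in> (\<lambda>p. (insert n (fst p), snd p)) ` B r (S0 \<inter> S1)"
        then obtain Q' c' where m: "(Q', c') \<in> B r (S0 \<inter> S1)" and pe: "p = (insert n Q', c')" by auto
        have h: "Q' \<subseteq> {..<n}" "card Q' = r" "c' \<in> cube n" "\<forall>i\<in>Q'. \<not> c' i" "Cb n Q' c' \<subseteq> S0 \<inter> S1"
          using m unfolding B_def pairs_def by auto
        have "Cb (Suc n) (insert n Q') c' \<subseteq> S"
          unfolding Cb3[OF h(1)] using h(5) unfolding S0_def S1_def by blast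
        moreover have "c' \<in> cube (Suc n)" "\<not> c' n" using cube_le cube_n h by blast+
        moreover have "insert n Q' \<subseteq> {..<Suc n}" "n \<notin> Q'" using h(1) by auto
        moreover have "finite Q'" using h(1) finite_subset by blast
        ultimately show "p \<in> A3" using h Suc unfolding pe A3_def A_def pairs_def by auto
      qed
    qed
    have inj3: "inj_on (\<lambda>p. (insert n (fst p), snd p)) (B r (S0 \<inter> S1))"
    proof (rule inj_onI)
      fix p p' assume "p \<in> B r (S0 \<inter> S1)" "p' \<in> B r (S0 \<inter> S1)"
        "(insert n (fst p), snd p) = (insert n (fst p'), snd p')"
      hence a: "p \<in> pairs n r" "p' \<in> pairs n r" "insert n (fst p) = insert n (fst p')" "snd p = snd p'"
        unfolding B_def by auto
      have "fst p \<subseteq> {..<n}" "fst p' \<subseteq> {..<n}" using a(1,2) unfolding pairs_def by (cases p, simp, cases p', simp)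
      hence n1: "n \<notin> fst p" "n \<notin> fst p'" by auto
      have "fst p = fst p'" by (rule insert_ident[THEN iffD1, OF n1(1) n1(2) a(3)])
      thus "p = p'" using a(4) by (simp add: prod_eq_iff)
    qed
    have "card A3 = card (B r (S0 \<inter> S1))" unfolding e3 by (rule card_image[OF inj3])
    thus ?thesis unfolding Suc P_def B_def by simp
  qed
  have PA: "P (Suc n) q S = card A" by (simp add: P_def A_def)
  have PB: "\<And>r T. P n r T = card (B r T)" by (simp add: P_def B_def)
  have "card A2 = card (B q S1)" unfolding e2 by (rule card_image[OF inj2])
  thus ?thesis unfolding PA PB cA e1 c3 S0_def[symmetric] S1_def[symmetric]
    by (simp split: nat.split)
qed



lemma cube0: "cube 0 = {\<lambda>_. False}"
  by (auto simp: cube_def fun_eq_iff)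

lemma pairs0: "pairs 0 q = (if q = 0 then {({}, \<lambda>_. False)} else {})"
  by (auto simp: pairs_def cube0)

lemma Cb0: "Cb 0 {} c = cube 0" by (simp add: Cb_def)

lemma P0: "P 0 q S = (if q = 0 \<and> (\<lambda>_. False) \<in> S then 1 else 0)"
proof (cases "q = 0")
  case True
  have "{p \<in> pairs 0 q. Cb 0 (fst p) (snd p) \<subseteq> S} = (if (\<lambda>_. False) \<in> S then {({}, \<lambda>_. False)} else {})"
    unfolding pairs0 using True by (auto simp: Cb_def cube0)
  thus ?thesis unfolding P_def using True by simp
next
  case False thus ?thesis unfolding P_def pairs0 by simp
qed

lemma P_empty: "P n q {} = 0"
proof -
  have E: "{p \<in> pairs n q. Cb n (fst p) (snd p) \<subseteq> {}} = {}"
  proof (rule equals0I)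
    fix p assume p: "p \<in> {p \<in> pairs n q. Cb n (fst p) (snd p) \<subseteq> {}}"
    hence "snd p \<in> cube n" unfolding pairs_def by (cases p) simp
    hence "snd p \<in> Cb n (fst p) (snd p)" by (rule Cb_mem)
    thus False using p by blast
  qed
  show ?thesis unfolding P_def E by simp
qed

lemma Cb_inj: "inj_on (\<lambda>p. Cb n (fst p) (snd p)) (pairs n q)"
proof (rule inj_onI)
  fix p p' assume pp: "p \<in> pairs n q" "p' \<in> pairs n q" and e: "Cb n (fst p) (snd p) = Cb n (fst p') (snd p')"
  obtain Q c where p: "p = (Q, c)" by (cases p)
  obtain Q' c' where p': "p' = (Q', c')" by (cases p')
  have h: "Q \<subseteq> {..<n}" "c \<in> cube n" "\<forall>i\<in>Q. \<not> c i" using pp(1) unfolding p pairs_def by auto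
  have h': "Q' \<subseteq> {..<n}" "c' \<in> cube n" "\<forall>i\<in>Q'. \<not> c' i" using pp(2) unfolding p' pairs_def by auto
  have e': "Cb n Q c = Cb n Q' c'" using e unfolding p p' by simp
  have sub: "Q \<subseteq> Q'" if "Q \<subseteq> {..<n}" "c \<in> cube n" "\<forall>i\<in>Q. \<not> c i"
      "Q' \<subseteq> {..<n}" "c' \<in> cube n" "\<forall>i\<in>Q'. \<not> c' i" "Cb n Q c = Cb n Q' c'" for Q Q' c c'
  proof
    fix i assume i: "i \<in> Q"
    show "i \<in> Q'"
    proof (rule ccontr)
      assume ni: "i \<notin> Q'"
      have inn: "i < n" using i that(1) by auto
      have "c \<in> Cb n Q c" using that(2) by (rule Cb_mem)
      hence "c \<in> Cb n Q' c'" using that(7) by simp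
      hence ci: "c i = c' i" using inn ni unfolding Cb_def by simp
      have "c(i:=True) \<in> cube n" using that(2) inn unfolding cube_def by simp
      hence "c(i:=True) \<in> Cb n Q c" unfolding Cb_def using i by auto
      hence "c(i:=True) \<in> Cb n Q' c'" using that(7) by simp
      hence "(c(i:=True)) i = c' i" using inn ni unfolding Cb_def by blast
      hence "True = c' i" by simp
      thus False using ci i that(3) by simp
    qed
  qed
  have QQ: "Q = Q'" using sub[OF h h' e'] sub[OF h' h e'[symmetric]] by (rule antisym)
  have "c = c'"
  proof (rule ext)
    fix i show "c i = c' i"
    proof (cases "i < n \<and> i \<notin> Q")
      case True
      have "c \<in> Cb n Q c" using h(2) by (rule Cb_mem)
      hence "c \<in> Cb n Q' c'" using e' by simp
      thus ?thesis using True QQ unfolding Cb_def by simp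
    next
      case False
      thus ?thesis
      proof (cases "i < n")
        case True hence "i \<in> Q" using False by simp
        thus ?thesis using h(3) h'(3) QQ by simp
      next
        case False thus ?thesis using h(2) h'(2) unfolding cube_def by simp
      qed
    qed
  qed
  thus "p = p'" using QQ p p' by simp
qed

lemma subcubes_eq: "q \<le> n \<Longrightarrow> subcubes n q = (\<lambda>p. Cb n (fst p) (snd p)) ` pairs n q"
proof (rule set_eqI)
  fix C assume qn: "q \<le> n"
  show "C \<in> subcubes n q \<longleftrightarrow> C \<in> (\<lambda>p. Cb n (fst p) (snd p)) ` pairs n q"
  proof
    assume "C \<in> subcubes n q"
    then obtain Q b where Q: "Q \<subseteq> {..<n}" "card Q = n - q" and C: "C = {x \<in> cube n. \<forall>i\<in>Q. x i = b i}"
      unfolding subcubes_def by blast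
    define F' where "F' = {..<n} - Q"
    define c where "c = (\<lambda>i. i \<in> Q \<and> b i)"
    have finQ: "finite Q" using Q(1) finite_subset by blast
    have "card F' = n - (n - q)" unfolding F'_def using card_Diff_subset[OF finQ Q(1)] Q(2) by simp
    hence cF: "card F' = q" using qn by simp
    have c: "c \<in> cube n" unfolding c_def cube_def using Q(1) by auto
    have m: "(F', c) \<in> pairs n q" using cF c unfolding pairs_def F'_def c_def by auto
    have e: "C = Cb n F' c"
    proof (rule set_eqI)
      fix x show "x \<in> C \<longleftrightarrow> x \<in> Cb n F' c"
        unfolding C Cb_def F'_def c_def using Q(1) by auto
    qed
    have e2: "C = (\<lambda>p. Cb n (fst p) (snd p)) (F', c)" using e by simp
    show "C \<in> (\<lambda>p. Cb n (fst p) (snd p)) ` pairs n q"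
      by (rule image_eqI[where f="\<lambda>p. Cb n (fst p) (snd p)", OF e2 m])
  next
    assume "C \<in> (\<lambda>p. Cb n (fst p) (snd p)) ` pairs n q"
    then obtain Q c where m: "(Q, c) \<in> pairs n q" and C: "C = Cb n Q c" by auto
    have h: "Q \<subseteq> {..<n}" "card Q = q" using m unfolding pairs_def by auto
    have finQ: "finite Q" using h(1) finite_subset by blast
    have "card ({..<n} - Q) = n - q" using card_Diff_subset[OF finQ h(1)] h(2) by simp
    moreover have "C = {x \<in> cube n. \<forall>i\<in>{..<n} - Q. x i = c i}" unfolding C Cb_def by auto
    ultimately show "C \<in> subcubes n q" unfolding subcubes_def
      by (intro CollectI exI[of _ "{..<n} - Q"] exI[of _ c]) auto
  qed
qed

lemma m_P: "q \<le> n \<Longrightarrow> m n q S = P n q S"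
proof -
  assume qn: "q \<le> n"
  have "{C \<in> subcubes n q. C \<subseteq> S} = (\<lambda>p. Cb n (fst p) (snd p)) ` {p \<in> pairs n q. Cb n (fst p) (snd p) \<subseteq> S}"
    unfolding subcubes_eq[OF qn] by auto
  moreover have "inj_on (\<lambda>p. Cb n (fst p) (snd p)) {p \<in> pairs n q. Cb n (fst p) (snd p) \<subseteq> S}"
    by (rule inj_on_subset[OF Cb_inj]) auto
  ultimately show ?thesis unfolding m_def P_def by (simp add: card_image)
qed



lemma odd_shift:
  assumes j: "j < (2::nat)^n"
  shows "odd ((2^n + j) div 2^i) \<longleftrightarrow> (i = n \<or> odd (j div 2^i))"
proof (cases "i < n")
  case True
  have p: "(2::nat)^n = 2^(n-i) * 2^i" using True by (simp add: power_add[symmetric])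
  have "(2^n + j) div 2^i = 2^(n-i) + j div (2::nat)^i"
    unfolding p by (simp add: add.commute)
  moreover have "even ((2::nat)^(n-i))" using True by simp
  ultimately show ?thesis using True by simp
next
  case False
  show ?thesis
  proof (cases "i = n")
    case True
    have "j div 2^n = 0" using j by simp
    hence "(2^n + j) div 2^n = (1::nat)" using div_add_self1[of "(2::nat)^n" j] by simp
    thus ?thesis using True by simp
  next
    case ni: False
    hence "Suc n \<le> i" using False by simp
    hence le: "(2::nat)^Suc n \<le> 2^i" by (rule power_increasing) simp
    have "2^n + j < (2::nat)^Suc n" using j by simp
    hence "(2^n + j) div 2^i = (0::nat)" using le by simp
    moreover have "j div 2^i = 0" using j le by simp
    ultimately show ?thesis using ni by simp
  qed
qed

lemma h_shift: "j < 2^n \<Longrightarrow> h (2^n + j) = Suc (h j)"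
proof -
  assume j: "j < 2^n"
  have "{i. odd ((2^n + j) div 2^i)} = insert n {i. odd (j div 2^i)}"
    using odd_shift[OF j] by auto
  moreover have "n \<notin> {i. odd (j div 2^i)}" using j by simp
  ultimately show ?thesis unfolding h_def using hset_fin[of j] by simp
qed

lemma sum_shift: fixes a b :: nat and g :: "nat \<Rightarrow> nat" shows "(\<Sum>j<a+b. g j) = (\<Sum>j<a. g j) + (\<Sum>j<b. g (a+j)::nat)"
  by (induction b) simp_all

lemma X_sum: "X (\<lambda>q. \<Sum>j<k. g q j) q = (\<Sum>j<k. X (\<lambda>q. g q j) q)"
  by (simp add: X_def sum.distrib split: nat.split)

lemma F_shift: "k \<le> 2^n \<Longrightarrow> F (2^n + k) q = F (2^n) q + X (F k) q"
proof -
  assume k: "k \<le> 2^n"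
  have "F (2^n + k) q = F (2^n) q + (\<Sum>j<k. hq q (2^n + j))"
    unfolding F_def by (rule sum_shift)
  also have "(\<Sum>j<k. hq q (2^n + j)) = (\<Sum>j<k. X (\<lambda>q. hq q j) q)"
  proof (rule sum.cong)
    fix j assume "j \<in> {..<k}"
    hence "j < 2^n" using k by simp
    thus "hq q (2^n + j) = X (\<lambda>q. hq q j) q" by (rule hq_Suc[OF h_shift])
  qed simp
  also have "\<dots> = X (F k) q" unfolding F_def X_sum[symmetric] by simp
  finally show ?thesis .
qed

lemma bin_cube: "bin n i \<in> cube n" by (simp add: bin_def cube_def)

lemma bin_low: "i < 2^n \<Longrightarrow> bin (Suc n) i = bin n i"
proof (rule ext)
  fix j assume i: "i < 2^n"
  show "bin (Suc n) i j = bin n i j"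
  proof (cases "j = n")
    case True
    have "i div 2^n = 0" using i by simp
    thus ?thesis using True by (simp add: bin_def)
  qed (auto simp: bin_def less_Suc_eq)
qed

lemma bin_high: "r < 2^n \<Longrightarrow> bin (Suc n) (2^n + r) = (bin n r)(n:=True)"
proof (rule ext)
  fix j assume r: "r < 2^n"
  show "bin (Suc n) (2^n + r) j = ((bin n r)(n:=True)) j"
    using odd_shift[OF r, of j] by (auto simp: bin_def less_Suc_eq)
qed



lemma F_mono: "k \<le> k' \<Longrightarrow> F k q \<le> F k' q"
  unfolding F_def by (rule sum_mono2) auto

lemma F_q0: "F k 0 = k" by (simp add: F_def hq_def)

lemma card_split:
  assumes S: "S \<subseteq> cube (Suc n)"
  shows "card S = card (S \<inter> cube n) + card {y \<in> cube n. y(n:=True) \<in> S}"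
proof -
  define S0 where "S0 = S \<inter> cube n"
  define S1 where "S1 = {y \<in> cube n. y(n:=True) \<in> S}"
  have finS: "finite S" using S finite_cube finite_subset by blast
  have f1: "finite S1" unfolding S1_def using finite_cube by simp
  have SU: "S = S0 \<union> (\<lambda>y. y(n:=True)) ` S1"
  proof (rule set_eqI)
    fix x show "x \<in> S \<longleftrightarrow> x \<in> S0 \<union> (\<lambda>y. y(n:=True)) ` S1"
    proof
      assume x: "x \<in> S"
      show "x \<in> S0 \<union> (\<lambda>y. y(n:=True)) ` S1"
      proof (cases "x n")
        case False thus ?thesis using x S cube_Suc_False unfolding S0_def by blast
      next
        case True
        have e: "x = (x(n:=False))(n:=True)" using True by (simp add: fun_eq_iff)
        have "x(n:=False) \<in> cube n" using x S cube_upd_False by blast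
        hence m: "x(n:=False) \<in> S1" unfolding S1_def using x e by simp
        show ?thesis using image_eqI[where f="\<lambda>y. y(n:=True)", OF e m] by (rule UnI2)
      qed
    next
      assume "x \<in> S0 \<union> (\<lambda>y. y(n:=True)) ` S1"
      thus "x \<in> S" unfolding S0_def S1_def by auto
    qed
  qed
  have inj: "inj_on (\<lambda>y. y(n:=True)) S1"
    by (rule inj_onI) (rule upd_cancel, auto simp: S1_def)
  have disj: "S0 \<inter> (\<lambda>y. y(n:=True)) ` S1 = {}"
  proof (rule equals0I)
    fix x assume "x \<in> S0 \<inter> (\<lambda>y. y(n:=True)) ` S1"
    hence "x \<in> cube n" "x n" unfolding S0_def by auto
    thus False using cube_n by blast
  qed
  have "card S = card S0 + card ((\<lambda>y. y(n:=True)) ` S1)"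
    unfolding SU by (rule card_Un_disjoint) (use finS f1 disj in \<open>auto simp: S0_def\<close>)
  thus ?thesis using card_image[OF inj] unfolding S0_def S1_def by simp
qed

lemma upper: "S \<subseteq> cube n \<Longrightarrow> P n q S \<le> F (card S) q"
proof (induction n arbitrary: S q)
  case 0
  show ?case
  proof (cases "q = 0")
    case True
    have "S = {} \<or> S = {\<lambda>_. False}" using 0 unfolding cube0 by blast
    thus ?thesis using True by (auto simp: P0 F_q0)
  next
    case False thus ?thesis by (simp add: P0)
  qed
next
  case (Suc n)
  define S0 where "S0 = S \<inter> cube n"
  define S1 where "S1 = {y \<in> cube n. y(n:=True) \<in> S}"
  have sub: "S0 \<subseteq> cube n" "S1 \<subseteq> cube n" "S0 \<inter> S1 \<subseteq> cube n" unfolding S0_def S1_def by auto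
  have fin: "finite S0" "finite S1" using sub finite_cube finite_subset by blast+
  define a where "a = card S0"
  define b where "b = card S1"
  have cS: "card S = a + b" unfolding a_def b_def S0_def S1_def by (rule card_split[OF Suc.prems])
  have PS: "P (Suc n) q S = P n q S0 + P n q S1 + (case q of 0 \<Rightarrow> 0 | Suc p \<Rightarrow> P n p (S0 \<inter> S1))"
    unfolding S0_def S1_def by (rule P_Suc)
  have i0: "P n q S0 \<le> F a q" unfolding a_def by (rule Suc.IH[OF sub(1)])
  have i1: "P n q S1 \<le> F b q" unfolding b_def by (rule Suc.IH[OF sub(2)])
  show ?case
  proof (cases q)
    case 0
    show ?thesis using PS i0 i1 cS unfolding 0 F_q0 by simp
  next
    case (Suc p)
    have "P n p (S0 \<inter> S1) \<le> F (card (S0 \<inter> S1)) p" by (rule Suc.IH[OF sub(3)])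
    also have "\<dots> \<le> F (min a b) p"
    proof (rule F_mono)
      show "card (S0 \<inter> S1) \<le> min a b" unfolding a_def b_def using fin
        by (simp add: card_mono)
    qed
    finally have i2: "P n p (S0 \<inter> S1) \<le> F (min a b) p" .
    have PS': "P (Suc n) q S = P n q S0 + P n q S1 + P n p (S0 \<inter> S1)" using PS Suc by simp
    show ?thesis
    proof (cases "b \<le> a")
      case True
      have "F a q + X (F b) q \<le> F (a+b) q" by (rule ineq[OF True])
      moreover have "X (F b) q = F b q + F b p" unfolding Suc X_def by simp
      moreover have "min a b = b" using True by simp
      ultimately show ?thesis using PS' i0 i1 i2 cS by simp
    next
      case False
      hence ab: "a \<le> b" by simp
      have "F b q + X (F a) q \<le> F (b+a) q" by (rule ineq[OF ab])
      moreover have "X (F a) q = F a q + F a p" unfolding Suc X_def by simp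
      moreover have "min a b = a" using ab by simp
      ultimately show ?thesis using PS' i0 i1 i2 cS by (simp add: add.commute)
    qed
  qed
qed



lemma bin_split: "(i::nat) < 2 * 2^n \<Longrightarrow> i < 2^n \<or> (\<exists>r. r < 2^n \<and> i = 2^n + r)"
  by (cases "i < 2^n") (auto intro: exI[of _ "i - 2^n"])

lemma SS0:
  assumes k: "k \<le> 2^Suc n"
  shows "Sstar k (Suc n) \<inter> cube n = Sstar (min k (2^n)) n"
proof (rule set_eqI)
  fix x
  show "x \<in> Sstar k (Suc n) \<inter> cube n \<longleftrightarrow> x \<in> Sstar (min k (2^n)) n"
  proof
    assume "x \<in> Sstar k (Suc n) \<inter> cube n"
    then obtain i where i: "i < k" and x: "x = bin (Suc n) i" and xc: "x \<in> cube n"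
      unfolding Sstar_def by blast
    have "i < 2 * 2^n" using i k by simp
    hence "i < 2^n \<or> (\<exists>r. r < 2^n \<and> i = 2^n + r)" by (rule bin_split)
    thus "x \<in> Sstar (min k (2^n)) n"
    proof
      assume i2: "i < 2^n"
      hence "x = bin n i" using x bin_low by simp
      moreover have "i \<in> {..<min k (2^n)}" using i i2 by simp
      ultimately show ?thesis unfolding Sstar_def by blast
    next
      assume "\<exists>r. r < 2^n \<and> i = 2^n + r"
      then obtain r where "r < 2^n" "i = 2^n + r" by blast
      hence "x n" using x bin_high by simp
      thus ?thesis using xc cube_n by blast
    qed
  next
    assume "x \<in> Sstar (min k (2^n)) n"
    then obtain i where i: "i < min k (2^n)" and x: "x = bin n i" unfolding Sstar_def by blast
    have "x = bin (Suc n) i" using x bin_low i by simp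
    hence "x \<in> Sstar k (Suc n)" unfolding Sstar_def using i by simp
    thus "x \<in> Sstar k (Suc n) \<inter> cube n" using x bin_cube by blast
  qed
qed

lemma SS1:
  assumes k: "k \<le> 2^Suc n"
  shows "{y \<in> cube n. y(n:=True) \<in> Sstar k (Suc n)} = Sstar (k - 2^n) n"
proof (rule set_eqI)
  fix y
  show "y \<in> {y \<in> cube n. y(n:=True) \<in> Sstar k (Suc n)} \<longleftrightarrow> y \<in> Sstar (k - 2^n) n"
  proof
    assume "y \<in> {y \<in> cube n. y(n:=True) \<in> Sstar k (Suc n)}"
    then obtain i where yc: "y \<in> cube n" and i: "i < k" and e: "y(n:=True) = bin (Suc n) i"
      unfolding Sstar_def by blast
    have "i < 2 * 2^n" using i k by simp
    hence "i < 2^n \<or> (\<exists>r. r < 2^n \<and> i = 2^n + r)" by (rule bin_split)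
    thus "y \<in> Sstar (k - 2^n) n"
    proof
      assume i2: "i < 2^n"
      hence "y(n:=True) = bin n i" using e bin_low by simp
      hence "(bin n i) n" by (metis fun_upd_same)
      thus ?thesis using bin_cube cube_n by blast
    next
      assume "\<exists>r. r < 2^n \<and> i = 2^n + r"
      then obtain r where r: "r < 2^n" "i = 2^n + r" by blast
      hence "y(n:=True) = (bin n r)(n:=True)" using e bin_high by simp
      hence "y = bin n r" using upd_cancel yc bin_cube by blast
      moreover have "r \<in> {..<k - 2^n}" using r i by simp
      ultimately show ?thesis unfolding Sstar_def by blast
    qed
  next
    assume "y \<in> Sstar (k - 2^n) n"
    then obtain r where r: "r < k - 2^n" and y: "y = bin n r" unfolding Sstar_def by blast
    have r2: "r < 2^n" using r k by simp
    have "y(n:=True) = bin (Suc n) (2^n + r)" using y bin_high[OF r2] by simp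
    moreover have "2^n + r \<in> {..<k}" using r by simp
    ultimately have "y(n:=True) \<in> Sstar k (Suc n)" unfolding Sstar_def by blast
    thus "y \<in> {y \<in> cube n. y(n:=True) \<in> Sstar k (Suc n)}" using y bin_cube by blast
  qed
qed

lemma Sstar_mono: "a \<le> b \<Longrightarrow> Sstar a n \<subseteq> Sstar b n"
  unfolding Sstar_def by auto

lemma exact: "k \<le> 2^n \<Longrightarrow> P n q (Sstar k n) = F k q"
proof (induction n arbitrary: k q)
  case 0
  hence "k \<le> 1" by simp
  hence "k = 0 \<or> k = 1" by linarith
  thus ?case
  proof
    assume "k = 0" thus ?thesis by (simp add: Sstar_def P_empty F_def)
  next
    assume k1: "k = 1"
    have "Sstar k 0 = {\<lambda>_. False}" unfolding k1 Sstar_def by (simp add: bin_def fun_eq_iff lessThan_Suc)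
    moreover have "h 0 = 0" by (simp add: h_def)
    ultimately show ?thesis unfolding k1 by (cases q) (simp_all add: P0 F_def hq_def)
  qed
next
  case (Suc n)
  have PS: "P (Suc n) q (Sstar k (Suc n)) = P n q (Sstar (min k (2^n)) n) + P n q (Sstar (k - 2^n) n)
     + (case q of 0 \<Rightarrow> 0 | Suc p \<Rightarrow> P n p (Sstar (min k (2^n)) n \<inter> Sstar (k - 2^n) n))"
    using P_Suc[of n q "Sstar k (Suc n)"] unfolding SS0[OF Suc.prems] SS1[OF Suc.prems] .
  show ?case
  proof (cases "k \<le> 2^n")
    case True
    have "k - 2^n = 0" using True by simp
    hence e: "Sstar (k - 2^n) n = {}" unfolding Sstar_def by simp
    have "P n q (Sstar k n) = F k q" by (rule Suc.IH[OF True])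
    thus ?thesis using PS True unfolding e by (simp add: P_empty split: nat.split)
  next
    case False
    define k' where "k' = k - 2^n"
    have k': "k' \<le> 2^n" "k = 2^n + k'" using False Suc.prems unfolding k'_def by simp_all
    have mk: "min k (2^n) = 2^n" using False by simp
    have int: "Sstar (2^n) n \<inter> Sstar k' n = Sstar k' n" using Sstar_mono[OF k'(1)] by blast
    have i1: "P n q (Sstar (2^n) n) = F (2^n) q" by (rule Suc.IH) simp
    have i2: "\<And>q. P n q (Sstar k' n) = F k' q" by (rule Suc.IH[OF k'(1)])
    have "P (Suc n) q (Sstar k (Suc n)) = F (2^n) q + X (F k') q"
      using PS unfolding mk k'_def[symmetric] int i1 i2 by (simp add: X_def split: nat.split)
    also have "\<dots> = F k q" unfolding k'(2) by (rule F_shift[OF k'(1), symmetric])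
    finally show ?thesis .
  qed
qed

theorem theorem1:
  fixes n k q :: nat
  assumes "1 \<le> n" and "1 \<le> k" and "k \<le> 2 ^ n" and "q \<le> n"
  shows "m n q (Sstar k n) = (\<Sum>j<k. hq q j)
         \<and> (\<forall>S. S \<subseteq> cube n \<and> card S = k \<longrightarrow> m n q S \<le> m n q (Sstar k n))"
proof -
  have ex: "m n q (Sstar k n) = F k q" using m_P[OF assms(4)] exact[OF assms(3)] by simp
  show ?thesis
  proof
    show "m n q (Sstar k n) = (\<Sum>j<k. hq q j)" using ex by (simp add: F_def)
    show "\<forall>S. S \<subseteq> cube n \<and> card S = k \<longrightarrow> m n q S \<le> m n q (Sstar k n)"
    proof (intro allI impI)
      fix S assume S: "S \<subseteq> cube n \<and> card S = k"
      have "m n q S = P n q S" by (rule m_P[OF assms(4)])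
      also have "\<dots> \<le> F (card S) q" using S by (intro upper) simp
      finally show "m n q S \<le> m n q (Sstar k n)" using S ex by simp
    qed
  qed
qed


end
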